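(* For every finite graph $\mathbb{G}$, the height 1 condition $\Sigma_{\mathbb{G}}$ is trivial if and only if $\mathbb{G}$ is 3-colorable (i.e., admits a homomorphism to $\mathbb{K}_3$).
   Context: A graph is a structure $(V,E)$ with a single symmetric binary relation $E$ (loops allowed); $\mathbb{K}_3$ is the complete loopless graph on three vertices. A clone on a set $A$ is a set of finitary operations on $A$ containing all projections and closed under composition; $\mathcal{P}$ is the clone of projections on $\{0,1\}$. A height 1 condition is a finite set of identities $f(x_{\pi(1)},\dots,x_{\pi(n)})\approx g(x_{\rho(1)},\dots,x_{\rho(m)})$ (function symbols $f,g$, arbitrary maps $\pi,\rho$, universally quantified); a clone satisfies it if its symbols can be assigned functions of the clone of the right arities making all identities true; the condition is trivial if it is satisfied in every clone (equivalently, in $\mathcal{P}$). For a finite graph $\mathbb{G}=(V,E)$, $\Sigma_{\mathbb{G}}$ is the height 1 condition with a ternary symbol $f_v$ for each $v\in V$, a $6$-ary symbol $g_{(u,v)}$ for each $(u,v)\in E$, and, for each $(u,v)\in E$, the identities $f_u(x,y,z)\approx g_{(u,v)}(x,y,x,z,y,z)$ and $f_v(x,y,z)\approx g_{(u,v)}(y,x,z,x,z,y)$. *)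

theory Defs
  imports Main
begin

definition fin_graph :: "'v set \<Rightarrow> ('v \<times> 'v) set \<Rightarrow> bool" where
  "fin_graph V E \<longleftrightarrow> finite V \<and> E \<subseteq> V \<times> V \<and> sym E"

definition graph_hom :: "'v set \<Rightarrow> ('v \<times> 'v) set \<Rightarrow> 'w set \<Rightarrow> ('w \<times> 'w) set \<Rightarrow> ('v \<Rightarrow> 'w) \<Rightarrow> bool" where
  "graph_hom V E W F h \<longleftrightarrow> (\<forall>v\<in>V. h v \<in> W) \<and> (\<forall>(u,v)\<in>E. (h u, h v) \<in> F)"

definition K3_V :: "nat set" where "K3_V = {0,1,2}"
definition K3_E :: "(nat \<times> nat) set" where "K3_E = {(a,b). a \<in> K3_V \<and> b \<in> K3_V \<and> a \<noteq> b}"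

definition three_colorable :: "'v set \<Rightarrow> ('v \<times> 'v) set \<Rightarrow> bool" where
  "three_colorable V E \<longleftrightarrow> (\<exists>h. graph_hom V E K3_V K3_E h)"

text \<open>Finitary operations on a set A are represented as pairs (arity n, function on argument lists
  of length n).\<close>
type_synonym 'a operation = "nat \<times> ('a list \<Rightarrow> 'a)"

definition projection_clone :: "'a set \<Rightarrow> 'a operation set" where
  "projection_clone A = {(n, \<lambda>xs. xs ! i) | n i. i < n}"

definition clone_P :: "bool operation set" where
  "clone_P = projection_clone (UNIV :: bool set)"

definition satisfies_Sigma ::
    "'a set \<Rightarrow> 'a operation set \<Rightarrow> 'v set \<Rightarrow> ('v \<times> 'v) set \<Rightarrow> bool" where
  "satisfies_Sigma A C V E \<longleftrightarrow>
     (\<exists>(f :: 'v \<Rightarrow> 'a list \<Rightarrow> 'a) (g :: 'v \<times> 'v \<Rightarrow> 'a list \<Rightarrow> 'a).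
        (\<forall>v\<in>V. (3, f v) \<in> C) \<and> (\<forall>e\<in>E. (6, g e) \<in> C) \<and>
        (\<forall>(u,v)\<in>E. \<forall>x\<in>A. \<forall>y\<in>A. \<forall>z\<in>A.
            f u [x,y,z] = g (u,v) [x,y,x,z,y,z] \<and>
            f v [x,y,z] = g (u,v) [y,x,z,x,z,y]))"

definition Sigma_trivial :: "'v set \<Rightarrow> ('v \<times> 'v) set \<Rightarrow> bool" where
  "Sigma_trivial V E \<longleftrightarrow> satisfies_Sigma (UNIV :: bool set) clone_P V E"

end

theory Submission
  imports Defs
begin

definition idx :: "nat \<Rightarrow> nat \<Rightarrow> nat" where
  "idx a b = (if a = 0 \<and> b = 1 then 0 else if a = 1 \<and> b = 0 then 1 else
     if a = 0 \<and> b = 2 then 2 else if a = 2 \<and> b = 0 then 3 else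
     if a = 1 \<and> b = 2 then 4 else 5)"

lemma less3: "(i::nat) < 3 \<Longrightarrow> i = 0 \<or> i = 1 \<or> i = 2" by auto
lemma less6: "(i::nat) < 6 \<Longrightarrow> i = 0 \<or> i = 1 \<or> i = 2 \<or> i = 3 \<or> i = 4 \<or> i = 5" by auto

lemma key:
  assumes "i < 3" "j < 6"
    and "\<forall>x y z::bool. [x,y,z] ! i = [x,y,x,z,y,z] ! j \<and> [x,y,z] ! i = [y,x,z,x,z,y] ! j"
  shows False
proof -
  have a: "[True,False,False] ! i = [True,False,True,False,False,False] ! j \<and> [True,False,False] ! i = [False,True,False,True,False,False] ! j"
   and b: "[False,True,False] ! i = [False,True,False,False,True,False] ! j \<and> [False,True,False] ! i = [True,False,False,False,False,True] ! j"
   and d: "[False,False,True] ! i = [False,False,False,True,False,True] ! j \<and> [False,False,True] ! i = [False,False,True,False,True,False] ! j"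
    using assms(3) by blast+
  show False using less3[OF assms(1)] less6[OF assms(2)] a b d by (elim disjE; simp)
qed

lemma back_dir:
  assumes "a \<in> K3_V" "b \<in> K3_V" "a \<noteq> b"
  shows "[x,y,z] ! a = [x,y,x,z,y,z] ! idx a b \<and> [x,y,z] ! b = [y,x,z,x,z,y] ! idx a b"
  using assms by (auto simp: K3_V_def idx_def)

theorem lemma3p3:
  fixes V :: "'v set" and E :: "('v \<times> 'v) set"
  assumes "fin_graph V E"
  shows "Sigma_trivial V E \<longleftrightarrow> three_colorable V E"
proof
  have EV: "E \<subseteq> V \<times> V" using assms by (simp add: fin_graph_def)
  assume "Sigma_trivial V E"
  then obtain f g where
    hf: "\<forall>v\<in>V. (3, f v) \<in> clone_P" and hg: "\<forall>e\<in>E. (6, g e) \<in> clone_P" and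
    hid: "\<forall>(u,v)\<in>E. \<forall>x y z::bool.
            f u [x,y,z] = g (u,v) [x,y,x,z,y,z] \<and> f v [x,y,z] = g (u,v) [y,x,z,x,z,y]"
    unfolding Sigma_trivial_def satisfies_Sigma_def by auto
  have "\<forall>v\<in>V. \<exists>i. i < 3 \<and> f v = (\<lambda>xs. xs ! i)"
    using hf by (auto simp: clone_P_def projection_clone_def)
  then obtain c where c: "\<And>v. v \<in> V \<Longrightarrow> c v < 3 \<and> f v = (\<lambda>xs. xs ! c v)" by metis
  have "graph_hom V E K3_V K3_E c"
    unfolding graph_hom_def
  proof (intro conjI ballI)
    fix v assume "v \<in> V" then show "c v \<in> K3_V" using c[of v] by (auto simp: K3_V_def)
  next
    fix e assume e: "e \<in> E"
    obtain u v where uv: "e = (u,v)" by (cases e)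
    with e EV have uV: "u \<in> V" and vV: "v \<in> V" by auto
    obtain j where j: "j < 6" "g e = (\<lambda>xs. xs ! j)"
      using hg e by (auto simp: clone_P_def projection_clone_def)
    have neq: "c u \<noteq> c v"
    proof
      assume eq: "c u = c v"
      have "\<forall>x y z::bool. [x,y,z] ! c u = [x,y,x,z,y,z] ! j \<and> [x,y,z] ! c u = [y,x,z,x,z,y] ! j"
      proof (intro allI)
        fix x y z :: bool
        have "f u [x,y,z] = g (u,v) [x,y,x,z,y,z] \<and> f v [x,y,z] = g (u,v) [y,x,z,x,z,y]"
          using hid e uv by fastforce
        moreover have "f u = (\<lambda>xs. xs ! c u)" "f v = (\<lambda>xs. xs ! c u)" "g (u,v) = (\<lambda>xs. xs ! j)"
          using j uv c[OF uV] c[OF vV] eq by auto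
        ultimately show "[x,y,z] ! c u = [x,y,x,z,y,z] ! j \<and> [x,y,z] ! c u = [y,x,z,x,z,y] ! j"
          by metis
      qed
      then show False using key c[OF uV] j by blast
    qed
    show "case e of (u, v) \<Rightarrow> (c u, c v) \<in> K3_E"
      using uv neq c[OF uV] c[OF vV] by (auto simp: K3_E_def K3_V_def)
  qed
  then show "three_colorable V E" by (auto simp: three_colorable_def)
next
  have EV: "E \<subseteq> V \<times> V" using assms by (simp add: fin_graph_def)
  assume "three_colorable V E"
  then obtain h where h: "graph_hom V E K3_V K3_E h" by (auto simp: three_colorable_def)
  define f where "f = (\<lambda>v. (\<lambda>xs::bool list. xs ! h v))"
  define g where "g = (\<lambda>(u,v). (\<lambda>xs::bool list. xs ! idx (h u) (h v)))"
  have "\<forall>v\<in>V. (3, f v) \<in> clone_P"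
  proof
    fix v assume "v \<in> V"
    then have "h v < 3" using h by (auto simp: graph_hom_def K3_V_def)
    then show "(3, f v) \<in> clone_P" unfolding f_def clone_P_def projection_clone_def by blast
  qed
  moreover have "\<forall>e\<in>E. (6, g e) \<in> clone_P"
  proof
    fix e assume "e \<in> E"
    obtain u v where "e = (u,v)" by (cases e)
    have "idx (h u) (h v) < 6" by (simp add: idx_def)
    then show "(6, g e) \<in> clone_P" using \<open>e = (u,v)\<close>
      by (auto simp: g_def clone_P_def projection_clone_def)
  qed
  moreover have "\<forall>(u,v)\<in>E. \<forall>x\<in>UNIV. \<forall>y\<in>UNIV. \<forall>z\<in>UNIV.
            f u [x,y,z] = g (u,v) [x,y,x,z,y,z] \<and> f v [x,y,z] = g (u,v) [y,x,z,x,z,y]"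
  proof (clarify)
    fix u v x y z assume "(u,v) \<in> E"
    then have "(h u, h v) \<in> K3_E" using h by (auto simp: graph_hom_def)
    then have "h u \<in> K3_V" "h v \<in> K3_V" "h u \<noteq> h v" by (auto simp: K3_E_def)
    from back_dir[OF this] show "f u [x,y,z] = g (u,v) [x,y,x,z,y,z] \<and> f v [x,y,z] = g (u,v) [y,x,z,x,z,y]"
      by (simp add: f_def g_def)
  qed
  ultimately show "Sigma_trivial V E"
    unfolding Sigma_trivial_def satisfies_Sigma_def by blast
qed

end
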